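(* For a definable set $X\subseteq Z^m\times R^n$ the following are equivalent: (1) $X$ is $Z$-internal; (2) the projection of $X$ on the $R$-coordinates (i.e. onto $R^n$) is finite; (3) there is a definable bijection from $X$ to a definable subset of $Z^{m+1}$.
   Context: Let $\mathfrak C$ be a monster model, $Z,R$ definable subsets of $\mathfrak C$ which are stably embedded (subsets of $Z^n$, resp. $R^n$, definable with parameters from $\mathfrak C$ are definable with parameters from $Z$, resp. $R$) and fully orthogonal (for all $m,n$, every definable subset of $Z^m\times R^n$ is a finite union of sets $U\times V$ with $U\subseteq Z^m$, $V\subseteq R^n$ definable). "Definable" means definable in $(Z,R)^{eq}$ (the two-sorted structure $(Z,R)$ with no connection between the sorts, expanded by imaginary sorts) with parameters from the monster model. A definable set $X$ is $Z$-internal if there is a definable surjection from $Z^k$ onto $X$ for some $k$. *)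

theory Defs
  imports Main
begin

text \<open>Points of Z^a x R^b are pairs (zs, rs) of lists, zs of length a with entries
in Z and rs of length b with entries in R.\<close>

definition sp :: "'z set \<Rightarrow> 'r set \<Rightarrow> nat \<Rightarrow> nat \<Rightarrow> ('z list \<times> 'r list) set" where
  "sp Z R a b = {(zs, rs). length zs = a \<and> set zs \<subseteq> Z \<and> length rs = b \<and> set rs \<subseteq> R}"

text \<open>Product U x V of U subset Z^a (as subset of Z^a x R^0) and V subset R^b
(as subset of Z^0 x R^b).\<close>

definition rect :: "('z list \<times> 'r list) set \<Rightarrow> ('z list \<times> 'r list) set \<Rightarrow> ('z list \<times> 'r list) set" where
  "rect U V = {(zs, rs). (zs, []) \<in> U \<and> ([], rs) \<in> V}"

text \<open>A (two-sorted) structure on the sorts Z, R in the sense of van den Dries: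
D a b is the collection of definable (with parameters) subsets of Z^a x R^b.\<close>

definition two_sorted_structure ::
  "'z set \<Rightarrow> 'r set \<Rightarrow> (nat \<Rightarrow> nat \<Rightarrow> ('z list \<times> 'r list) set set) \<Rightarrow> bool" where
  "two_sorted_structure Z R D \<longleftrightarrow>
     (\<forall>a b. \<forall>A\<in>D a b. A \<subseteq> sp Z R a b) \<and>
     (\<forall>a b. sp Z R a b \<in> D a b) \<and>
     (\<forall>a b. \<forall>A\<in>D a b. \<forall>B\<in>D a b. A \<union> B \<in> D a b) \<and>
     (\<forall>a b. \<forall>A\<in>D a b. sp Z R a b - A \<in> D a b) \<and>
     (\<forall>a b c d. \<forall>A\<in>D a b. \<forall>B\<in>D c d.
        {(zs @ zs', rs @ rs') | zs rs zs' rs'. (zs, rs) \<in> A \<and> (zs', rs') \<in> B} \<in> D (a + c) (b + d)) \<and>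
     (\<forall>a b c d. \<forall>A\<in>D (a + c) (b + d). (\<lambda>(zs, rs). (take a zs, take b rs)) ` A \<in> D a b) \<and>
     (\<forall>a b p q. bij_betw p {..<a} {..<a} \<longrightarrow> bij_betw q {..<b} {..<b} \<longrightarrow>
        (\<forall>A\<in>D a b. (\<lambda>(zs, rs). (map (\<lambda>i. zs ! p i) [0..<a], map (\<lambda>j. rs ! q j) [0..<b])) ` A \<in> D a b)) \<and>
     {([z, z], []) | z. z \<in> Z} \<in> D 2 0 \<and>
     {([], [r, r]) | r. r \<in> R} \<in> D 0 2 \<and>
     (\<forall>z\<in>Z. {([z], [])} \<in> D 1 0) \<and>
     (\<forall>r\<in>R. {([], [r])} \<in> D 0 1)"

definition fully_orthogonal ::
  "'z set \<Rightarrow> 'r set \<Rightarrow> (nat \<Rightarrow> nat \<Rightarrow> ('z list \<times> 'r list) set set) \<Rightarrow> bool" where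
  "fully_orthogonal Z R D \<longleftrightarrow>
     (\<forall>a b. \<forall>A\<in>D a b. \<exists>F. finite F \<and> (\<forall>(U, V)\<in>F. U \<in> D a 0 \<and> V \<in> D 0 b) \<and>
        A = (\<Union>(U, V)\<in>F. rect U V))"

definition graph_on :: "('z list \<times> 'r list) set \<Rightarrow> ('z list \<times> 'r list \<Rightarrow> 'z list \<times> 'r list)
   \<Rightarrow> ('z list \<times> 'r list) set" where
  "graph_on X f = {(fst x @ fst (f x), snd x @ snd (f x)) | x. x \<in> X}"

definition definable_map ::
  "'z set \<Rightarrow> 'r set \<Rightarrow> (nat \<Rightarrow> nat \<Rightarrow> ('z list \<times> 'r list) set set) \<Rightarrow> nat \<Rightarrow> nat \<Rightarrow> nat \<Rightarrow> nat
   \<Rightarrow> ('z list \<times> 'r list) set \<Rightarrow> ('z list \<times> 'r list \<Rightarrow> 'z list \<times> 'r list) \<Rightarrow> bool" where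
  "definable_map Z R D a b c d X f \<longleftrightarrow>
     X \<subseteq> sp Z R a b \<and> (\<forall>x\<in>X. f x \<in> sp Z R c d) \<and> graph_on X f \<in> D (a + c) (b + d)"

definition Z_internal ::
  "'z set \<Rightarrow> 'r set \<Rightarrow> (nat \<Rightarrow> nat \<Rightarrow> ('z list \<times> 'r list) set set) \<Rightarrow> nat \<Rightarrow> nat
   \<Rightarrow> ('z list \<times> 'r list) set \<Rightarrow> bool" where
  "Z_internal Z R D a b X \<longleftrightarrow>
     (\<exists>k f. definable_map Z R D k 0 a b (sp Z R k 0) f \<and> f ` sp Z R k 0 = X)"

end

theory Submission
  imports Defs
begin

definition prd :: "('z list \<times> 'r list) set \<Rightarrow> ('z list \<times> 'r list) set \<Rightarrow> ('z list \<times> 'r list) set" where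
  "prd A B = {(zs @ zs', rs @ rs') | zs rs zs' rs'. (zs, rs) \<in> A \<and> (zs', rs') \<in> B}"

definition dblz :: "('z list \<times> 'r list) set \<Rightarrow> ('z list \<times> 'r list) set" where
  "dblz A = {(zs @ zs, rs) | zs rs. (zs, rs) \<in> A}"

lemma rot_inj: assumes "i < (N::nat)" "j < N" "(i + k) mod N = (j + k) mod N" "i \<le> j" shows "i = j"
proof -
  have "N dvd (j + k) - (i + k)"
    using assms mod_eq_dvd_iff_nat[of "i + k" "j + k" N] by simp
  hence d: "N dvd j - i" by simp
  have "j - i < N" using assms by simp
  hence "j - i = 0" using d by (metis dvd_imp_le not_le neq0_conv)
  thus ?thesis using assms by simp
qed

lemma prd_mem: "w \<in> prd A B \<longleftrightarrow> (\<exists>x\<in>A. \<exists>y\<in>B. w = (fst x @ fst y, snd x @ snd y))"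
proof
  assume "w \<in> prd A B"
  then obtain zs rs zs' rs' where "w = (zs @ zs', rs @ rs')" "(zs, rs) \<in> A" "(zs', rs') \<in> B"
    unfolding prd_def by blast
  thus "\<exists>x\<in>A. \<exists>y\<in>B. w = (fst x @ fst y, snd x @ snd y)" by force
next
  assume "\<exists>x\<in>A. \<exists>y\<in>B. w = (fst x @ fst y, snd x @ snd y)"
  then obtain x y where "x \<in> A" "y \<in> B" "w = (fst x @ fst y, snd x @ snd y)" by blast
  thus "w \<in> prd A B" unfolding prd_def
    by (intro CollectI exI[of _ "fst x"] exI[of _ "snd x"] exI[of _ "fst y"] exI[of _ "snd y"]) simp
qed

context
  fixes Z :: "'z set" and R :: "'r set" and D :: "nat \<Rightarrow> nat \<Rightarrow> ('z list \<times> 'r list) set set"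
  assumes TS: "two_sorted_structure Z R D"
begin

lemma c1: "\<forall>a b. \<forall>A\<in>D a b. A \<subseteq> sp Z R a b"
  using TS unfolding two_sorted_structure_def by (elim conjE) assumption
lemma c2: "\<forall>a b. sp Z R a b \<in> D a b"
  using TS unfolding two_sorted_structure_def by (elim conjE) assumption
lemma c3: "\<forall>a b. \<forall>A\<in>D a b. \<forall>B\<in>D a b. A \<union> B \<in> D a b"
  using TS unfolding two_sorted_structure_def by (elim conjE) assumption
lemma c4: "\<forall>a b. \<forall>A\<in>D a b. sp Z R a b - A \<in> D a b"
  using TS unfolding two_sorted_structure_def by (elim conjE) assumption
lemma c5: "\<forall>a b c d. \<forall>A\<in>D a b. \<forall>B\<in>D c d.
        {(zs @ zs', rs @ rs') | zs rs zs' rs'. (zs, rs) \<in> A \<and> (zs', rs') \<in> B} \<in> D (a + c) (b + d)"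
  using TS unfolding two_sorted_structure_def by (elim conjE) assumption
lemma c6: "\<forall>a b c d. \<forall>A\<in>D (a + c) (b + d). (\<lambda>(zs, rs). (take a zs, take b rs)) ` A \<in> D a b"
  using TS unfolding two_sorted_structure_def by (elim conjE) assumption
lemma c7: "\<forall>a b p q. bij_betw p {..<a} {..<a} \<longrightarrow> bij_betw q {..<b} {..<b} \<longrightarrow>
        (\<forall>A\<in>D a b. (\<lambda>(zs, rs). (map (\<lambda>i. zs ! p i) [0..<a], map (\<lambda>j. rs ! q j) [0..<b])) ` A \<in> D a b)"
  using TS unfolding two_sorted_structure_def by (elim conjE) assumption
lemma c8: "{([z, z], []) | z. z \<in> Z} \<in> D 2 0"
  using TS unfolding two_sorted_structure_def by (elim conjE) assumption
lemma c10: "\<forall>z\<in>Z. {([z], [])} \<in> D 1 0"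
  using TS unfolding two_sorted_structure_def by (elim conjE) assumption
lemma c11: "\<forall>r\<in>R. {([], [r])} \<in> D 0 1"
  using TS unfolding two_sorted_structure_def by (elim conjE) assumption

lemma Dsub: "A \<in> D a b \<Longrightarrow> A \<subseteq> sp Z R a b"
  using c1 by blast
lemma Dsp: "sp Z R a b \<in> D a b"
  using c2 by blast
lemma Dun: "A \<in> D a b \<Longrightarrow> B \<in> D a b \<Longrightarrow> A \<union> B \<in> D a b"
  using c3 by blast
lemma Dcompl: "A \<in> D a b \<Longrightarrow> sp Z R a b - A \<in> D a b"
  using c4 by blast
lemma Dprd: "A \<in> D a b \<Longrightarrow> B \<in> D c d \<Longrightarrow> prd A B \<in> D (a + c) (b + d)"
  unfolding prd_def using c5 by blast
lemma Dtake: "A \<in> D (a + c) (b + d) \<Longrightarrow> (\<lambda>(zs, rs). (take a zs, take b rs)) ` A \<in> D a b"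
  using c6 by blast
lemma Dperm: "bij_betw p {..<a} {..<a} \<Longrightarrow> bij_betw q {..<b} {..<b} \<Longrightarrow> A \<in> D a b \<Longrightarrow>
   (\<lambda>(zs, rs). (map (\<lambda>i. zs ! p i) [0..<a], map (\<lambda>j. rs ! q j) [0..<b])) ` A \<in> D a b"
  using c7 by blast
lemma Ddiag: "{([z, z], []) | z. z \<in> Z} \<in> D 2 0"
  by (rule c8)
lemma Dptz: "z \<in> Z \<Longrightarrow> {([z], [])} \<in> D 1 0"
  using c10 by blast
lemma Dptr: "r \<in> R \<Longrightarrow> {([], [r])} \<in> D 0 1"
  using c11 by blast

lemma Dint: assumes "A \<in> D a b" "B \<in> D a b" shows "A \<inter> B \<in> D a b"
proof -
  have "A \<inter> B = sp Z R a b - ((sp Z R a b - A) \<union> (sp Z R a b - B))"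
    using Dsub[OF assms(1)] by blast
  thus ?thesis using assms by (simp add: Dcompl Dun)
qed

lemma Dempty: "{} \<in> D a b"
  using Dcompl[OF Dsp[of a b]] by simp

lemma DUnion: "finite S \<Longrightarrow> (\<And>s. s \<in> S \<Longrightarrow> G s \<in> D a b) \<Longrightarrow> (\<Union>s\<in>S. G s) \<in> D a b"
  by (induction S rule: finite_induct) (auto simp: Dempty Dun)

lemma sp00: "sp Z R 0 0 = {([], [])}"
  unfolding sp_def by auto

lemma prd_single: "prd {x} {y} = {(fst x @ fst y, snd x @ snd y)}"
  unfolding prd_def by (cases x; cases y) auto

lemma Dptzs: "set zs \<subseteq> Z \<Longrightarrow> {(zs, [])} \<in> D (length zs) 0"
proof (induction zs)
  case Nil thus ?case using Dsp[of 0 0] by (simp add: sp00)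
next
  case (Cons z zs)
  have "prd {([z],[])} {(zs,[])} \<in> D (1 + length zs) (0 + 0)"
    using Cons Dptz[of z] by (intro Dprd) auto
  thus ?case by (simp add: prd_single)
qed

lemma Dptrs: "set rs \<subseteq> R \<Longrightarrow> {([], rs)} \<in> D 0 (length rs)"
proof (induction rs)
  case Nil thus ?case using Dsp[of 0 0] by (simp add: sp00)
next
  case (Cons r rs)
  have "prd {([],[r])} {([],rs)} \<in> D (0 + 0) (1 + length rs)"
    using Cons Dptr[of r] by (intro Dprd) auto
  thus ?case by (simp add: prd_single)
qed

lemma Dpt: assumes "x \<in> sp Z R a b" shows "{x} \<in> D a b"
proof -
  obtain zs rs where x: "x = (zs, rs)" "length zs = a" "set zs \<subseteq> Z" "length rs = b" "set rs \<subseteq> R"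
    using assms unfolding sp_def by auto
  have "prd {(zs,[])} {([],rs)} \<in> D (length zs + 0) (0 + length rs)"
    using x by (intro Dprd Dptzs Dptrs)
  thus ?thesis using x by (simp add: prd_single)
qed

lemma Drot: assumes "A \<in> D N b"
  shows "(\<lambda>(zs, rs). (rotate k zs, rs)) ` A \<in> D N b"
proof (cases "N = 0")
  case True
  have "(\<lambda>(zs, rs). (rotate k zs, rs)) ` A = A"
  proof -
    have "\<forall>x\<in>A. length (fst x) = 0" using Dsub[OF assms] True unfolding sp_def by auto
    hence "\<And>x. x \<in> A \<Longrightarrow> (\<lambda>(zs, rs). (rotate k zs, rs)) x = x" by auto
    thus ?thesis by (simp add: image_cong)
  qed
  thus ?thesis using assms by simp
next
  case False
  let ?p = "\<lambda>i. (i + k) mod N"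
  have inj: "inj_on ?p {..<N}"
  proof
    fix i j assume "i \<in> {..<N}" "j \<in> {..<N}" "(i + k) mod N = (j + k) mod N"
    then show "i = j"
      using rot_inj[where i=i and j=j and N=N and k=k] rot_inj[where i=j and j=i and N=N and k=k]
      by (cases "i \<le> j") auto
  qed
  have "?p ` {..<N} = {..<N}"
    by (rule endo_inj_surj) (use inj False in auto)
  hence bp: "bij_betw ?p {..<N} {..<N}" using inj by (simp add: bij_betw_def)
  have bq: "bij_betw (\<lambda>j. j) {..<b} {..<b}" by (simp add: bij_betw_def)
  have eq: "(\<lambda>(zs, rs). (rotate k zs, rs)) ` A =
     (\<lambda>(zs, rs). (map (\<lambda>i. zs ! ?p i) [0..<N], map (\<lambda>j. rs ! j) [0..<b])) ` A"
  proof (rule image_cong[OF refl])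
    fix x assume "x \<in> A"
    then obtain zs rs where x: "x = (zs, rs)" "length zs = N" "length rs = b"
      using Dsub[OF assms] unfolding sp_def by auto
    have "map (\<lambda>i. zs ! ?p i) [0..<N] = rotate k zs"
      by (rule nth_equalityI) (auto simp: x nth_rotate add.commute)
    moreover have "map (\<lambda>j. rs ! j) [0..<b] = rs"
      by (rule nth_equalityI) (auto simp: x)
    ultimately show "(\<lambda>(zs, rs). (rotate k zs, rs)) x =
     (\<lambda>(zs, rs). (map (\<lambda>i. zs ! ?p i) [0..<N], map (\<lambda>j. rs ! j) [0..<b])) x" using x by simp
  qed
  show ?thesis unfolding eq by (rule Dperm[OF bp bq assms])
qed


definition Delta :: "nat \<Rightarrow> ('z list \<times> 'r list) set" where
  "Delta a = {(zs @ zs, []) | zs. length zs = a \<and> set zs \<subseteq> Z}"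

lemma cyc_map:
  assumes "length zs = a"
  shows "map (\<lambda>i. ([z,z] @ zs @ zs) ! (if i = 0 then 0 else if i \<le> a then i+1 else if i = a+1 then 1 else i))
     [0..<2 + (a + a)] = (z # zs) @ (z # zs)"
proof (rule nth_equalityI)
  show "length (map (\<lambda>i. ([z,z] @ zs @ zs) ! (if i = 0 then 0 else if i \<le> a then i+1 else if i = a+1 then 1 else i))
     [0..<2 + (a + a)]) = length ((z # zs) @ (z # zs))" using assms by simp
next
  fix i assume "i < length (map (\<lambda>i. ([z,z] @ zs @ zs) ! (if i = 0 then 0 else if i \<le> a then i+1 else if i = a+1 then 1 else i))
     [0..<2 + (a + a)])"
  hence i: "i < 2 + (a + a)" by simp
  show "map (\<lambda>i. ([z,z] @ zs @ zs) ! (if i = 0 then 0 else if i \<le> a then i+1 else if i = a+1 then 1 else i))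
     [0..<2 + (a + a)] ! i = ((z # zs) @ (z # zs)) ! i"
  proof -
    have gm: "map g [0..<N] ! k = g k" if "k < N" for g :: "nat \<Rightarrow> _" and N k using that by simp
    have e: "map (\<lambda>i. ([z,z] @ zs @ zs) ! (if i = 0 then 0 else if i \<le> a then i+1 else if i = a+1 then 1 else i))
     [0..<2 + (a + a)] ! i = ([z,z] @ zs @ zs) ! (if i = 0 then 0 else if i \<le> a then i+1 else if i = a+1 then 1 else i)"
      by (rule gm[OF i])
    consider "i = 0" | "0 < i \<and> i \<le> a" | "i = a + 1" | "a + 1 < i" by linarith
    then show ?thesis
    proof cases
      case 1 thus ?thesis unfolding e using i by simp
    next
      case 2
      then obtain j where j: "i = Suc j" "j < a" by (cases i) auto
      thus ?thesis unfolding e using i assms 2 by (simp add: nth_append)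
    next
      case 3 thus ?thesis unfolding e using i assms by (simp add: nth_append)
    next
      case 4
      define j where "j = i - a - 2"
      have j: "i = Suc (Suc (a + j))" "j < a" using i 4 unfolding j_def by auto
      thus ?thesis unfolding e using i assms 4 by (simp add: nth_append)
    qed
  qed
qed

lemma cyc_bij: "bij_betw (\<lambda>i::nat. if i = 0 then 0 else if i \<le> a then i+1 else if i = a+1 then 1 else i)
     {..<2 + (a + a)} {..<2 + (a + a)}"
proof -
  let ?p = "\<lambda>i::nat. if i = 0 then 0 else if i \<le> a then i+1 else if i = a+1 then 1 else i"
  have inj: "inj_on ?p {..<2 + (a + a)}"
    by (rule inj_onI) (auto split: if_splits)
  have "?p ` {..<2 + (a + a)} = {..<2 + (a + a)}"
    by (rule endo_inj_surj) (use inj in auto)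
  thus ?thesis using inj by (simp add: bij_betw_def)
qed

lemma DDelta: "Delta a \<in> D (a + a) 0"
proof (induction a)
  case 0
  have "Delta 0 = sp Z R 0 0" unfolding Delta_def sp00 by auto
  thus ?case using Dsp[of 0 0] by simp
next
  case (Suc a)
  let ?p = "\<lambda>i::nat. if i = 0 then 0 else if i \<le> a then i+1 else if i = a+1 then 1 else i"
  let ?f = "\<lambda>(zs, rs). (map (\<lambda>i. zs ! ?p i) [0..<2 + (a + a)], map (\<lambda>j. rs ! j) [0..<0+0])"
  have P: "prd {([z, z], []) | z. z \<in> Z} (Delta a) \<in> D (2 + (a + a)) (0 + 0)"
    by (intro Dprd Ddiag Suc)
  have bq: "bij_betw (\<lambda>j. j) {..<0+0} {..<0+0}" by (simp add: bij_betw_def)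
  have I: "?f ` prd {([z, z], []) | z. z \<in> Z} (Delta a) \<in> D (2 + (a + a)) (0 + 0)"
    by (rule Dperm[OF cyc_bij bq P])
  let ?S = "{(z, zs). z \<in> Z \<and> length zs = a \<and> set zs \<subseteq> Z}"
  have e1: "prd {([z, z], []) | z. z \<in> Z} (Delta a) = (\<lambda>(z, zs). ([z,z] @ zs @ zs, [] :: 'r list)) ` ?S"
  proof
    show "prd {([z, z], []) | z. z \<in> Z} (Delta a) \<subseteq> (\<lambda>(z, zs). ([z,z] @ zs @ zs, [] :: 'r list)) ` ?S"
      unfolding prd_def Delta_def by auto
  next
    show "(\<lambda>(z, zs). ([z,z] @ zs @ zs, [] :: 'r list)) ` ?S \<subseteq> prd {([z, z], []) | z. z \<in> Z} (Delta a)"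
    proof
      fix w assume "w \<in> (\<lambda>(z, zs). ([z,z] @ zs @ zs, [] :: 'r list)) ` ?S"
      then obtain z zs where w: "w = ([z,z] @ zs @ zs, [] :: 'r list)" "z \<in> Z" "length zs = a" "set zs \<subseteq> Z" by auto
      show "w \<in> prd {([z, z], []) | z. z \<in> Z} (Delta a)"
        unfolding prd_def Delta_def using w
        by (intro CollectI exI[of _ "[z,z]"] exI[of _ "[]"] exI[of _ "zs @ zs"] exI[of _ "[]"]) auto
    qed
  qed
  have e2: "?f ` ((\<lambda>(z, zs). ([z,z] @ zs @ zs, [] :: 'r list)) ` ?S) = (\<lambda>(z, zs). ((z # zs) @ (z # zs), [] :: 'r list)) ` ?S"
    unfolding image_image
  proof (rule image_cong[OF refl])
    fix x assume "x \<in> ?S"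
    then obtain z zs where x: "x = (z, zs)" "length zs = a" by auto
    show "?f (case x of (z, zs) \<Rightarrow> ([z, z] @ zs @ zs, [])) = (case x of (z, zs) \<Rightarrow> ((z # zs) @ z # zs, []))"
      using cyc_map[OF x(2), of z] x(1) by simp
  qed
  have e3: "(\<lambda>(z, zs). ((z # zs) @ (z # zs), [] :: 'r list)) ` ?S = Delta (Suc a)"
  proof
    show "(\<lambda>(z, zs). ((z # zs) @ (z # zs), [] :: 'r list)) ` ?S \<subseteq> Delta (Suc a)"
    proof
      fix w assume "w \<in> (\<lambda>(z, zs). ((z # zs) @ (z # zs), [] :: 'r list)) ` ?S"
      then obtain z zs where w: "w = ((z # zs) @ (z # zs), [])" "z \<in> Z" "length zs = a" "set zs \<subseteq> Z" by auto
      show "w \<in> Delta (Suc a)" unfolding Delta_def using w by (intro CollectI exI[of _ "z # zs"]) auto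
    qed
  next
    show "Delta (Suc a) \<subseteq> (\<lambda>(z, zs). ((z # zs) @ (z # zs), [] :: 'r list)) ` ?S"
    proof
      fix y assume "y \<in> Delta (Suc a)"
      then obtain ys where y: "y = (ys @ ys, [])" "length ys = Suc a" "set ys \<subseteq> Z"
        unfolding Delta_def by auto
      then obtain z zs where "ys = z # zs" by (cases ys) auto
      with y show "y \<in> (\<lambda>(z, zs). ((z # zs) @ (z # zs), [] :: 'r list)) ` ?S"
        by (auto intro!: image_eqI[where x="(z, zs)"])
    qed
  qed
  have eq: "?f ` prd {([z, z], []) | z. z \<in> Z} (Delta a) = Delta (Suc a)"
    using e1 e2 e3 by simp
  show ?case using I eq by simp
qed


lemma Ddblz: assumes "A \<in> D a b" shows "dblz A \<in> D (a + a) b"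
proof -
  have 1: "prd A (sp Z R a 0) \<in> D (a + a) (b + 0)" by (intro Dprd assms Dsp)
  have 2: "prd (Delta a) (sp Z R 0 b) \<in> D (a + a + 0) (0 + b)" by (intro Dprd DDelta Dsp)
  have "dblz A = prd A (sp Z R a 0) \<inter> prd (Delta a) (sp Z R 0 b)"
  proof
    show "dblz A \<subseteq> prd A (sp Z R a 0) \<inter> prd (Delta a) (sp Z R 0 b)"
    proof
      fix w assume "w \<in> dblz A"
      then obtain zs rs where w: "w = (zs @ zs, rs)" "(zs, rs) \<in> A" unfolding dblz_def by auto
      have l: "length zs = a" "set zs \<subseteq> Z" "length rs = b" "set rs \<subseteq> R"
        using Dsub[OF assms] w(2) unfolding sp_def by auto
      have s1: "(zs, []) \<in> sp Z R a 0" using l unfolding sp_def by simp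
      have s2: "([], rs) \<in> sp Z R 0 b" using l unfolding sp_def by simp
      have s3: "(zs @ zs, []) \<in> Delta a" using l unfolding Delta_def by blast
      have "w \<in> prd A (sp Z R a 0)" unfolding prd_mem
        using w(2) s1 w(1) by (intro bexI[of _ "(zs, rs)"] bexI[of _ "(zs, [])"]) simp_all
      moreover have "w \<in> prd (Delta a) (sp Z R 0 b)" unfolding prd_mem
        using s3 s2 w(1) by (intro bexI[of _ "(zs @ zs, [])"] bexI[of _ "([], rs)"]) simp_all
      ultimately show "w \<in> prd A (sp Z R a 0) \<inter> prd (Delta a) (sp Z R 0 b)" by blast
    qed
  next
    show "prd A (sp Z R a 0) \<inter> prd (Delta a) (sp Z R 0 b) \<subseteq> dblz A"
    proof
      fix w assume w: "w \<in> prd A (sp Z R a 0) \<inter> prd (Delta a) (sp Z R 0 b)"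
      hence "w \<in> prd A (sp Z R a 0)" "w \<in> prd (Delta a) (sp Z R 0 b)" by auto
      then obtain x1 y1 where w1: "x1 \<in> A" "y1 \<in> sp Z R a 0" "w = (fst x1 @ fst y1, snd x1 @ snd y1)"
        unfolding prd_mem by blast
      from \<open>w \<in> prd (Delta a) (sp Z R 0 b)\<close> obtain x2 y2 where w2: "x2 \<in> Delta a" "y2 \<in> sp Z R 0 b" "w = (fst x2 @ fst y2, snd x2 @ snd y2)"
        unfolding prd_mem by blast
      obtain vs where vs: "x2 = (vs @ vs, [])" "length vs = a" using w2(1) unfolding Delta_def by auto
      have "fst y2 = []" using w2(2) unfolding sp_def by auto
      have "snd y1 = []" "length (fst y1) = a" using w1(2) unfolding sp_def by auto
      have "length (fst x1) = a" using w1(1) Dsub[OF assms] unfolding sp_def by auto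
      have "fst x1 @ fst y1 = vs @ vs" using w1(3) w2(3) vs \<open>fst y2 = []\<close> by simp
      hence "fst x1 = vs" "fst y1 = vs"
        using append_eq_append_conv[of "fst x1" vs "fst y1" vs] \<open>length (fst x1) = a\<close> vs(2) by auto
      hence "w = (fst x1 @ fst x1, snd x1)" using w1(3) \<open>snd y1 = []\<close> by simp
      thus "w \<in> dblz A" using w1(1) unfolding dblz_def by (intro CollectI exI[of _ "fst x1"] exI[of _ "snd x1"]) simp
    qed
  qed
  thus ?thesis using Dint[of "prd A (sp Z R a 0)" "a+a" b "prd (Delta a) (sp Z R 0 b)"] 1 2 by simp
qed


end

lemma fin_func:
  assumes FO: "fully_orthogonal Z R D" and G: "G \<in> D a b"
    and fn: "\<And>u r r'. (u, r) \<in> G \<Longrightarrow> (u, r') \<in> G \<Longrightarrow> r = r'"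
  shows "finite (snd ` G)"
proof -
  have "\<exists>F. finite F \<and> (\<forall>(U, V)\<in>F. U \<in> D a 0 \<and> V \<in> D 0 b) \<and> G = (\<Union>(U, V)\<in>F. rect U V)"
    using FO[unfolded fully_orthogonal_def, rule_format, OF G] .
  then obtain F where F: "finite F" "G = (\<Union>(U, V)\<in>F. rect U V)" by (elim exE conjE) simp
  have sub: "snd ` G \<subseteq> (\<Union>p\<in>F. snd ` rect (fst p) (snd p))"
  proof
    fix r assume "r \<in> snd ` G"
    then obtain u where "(u, r) \<in> G" by force
    then obtain p where "p \<in> F" "(u, r) \<in> rect (fst p) (snd p)" using F(2) by (auto simp: split_beta)
    thus "r \<in> (\<Union>p\<in>F. snd ` rect (fst p) (snd p))" by force
  qed
  have "finite (snd ` rect (fst p) (snd p))" if "p \<in> F" for p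
  proof -
    define U where "U = fst p"
    define V where "V = snd p"
    have RG: "rect U V \<subseteq> G" using F(2) that unfolding U_def V_def by (auto simp: split_beta)
    have ss: "r = r'" if rr: "r \<in> snd ` rect U V" "r' \<in> snd ` rect U V" for r r'
    proof -
      obtain u where u: "(u, r) \<in> rect U V" using rr(1) by force
      obtain u' where u': "(u', r') \<in> rect U V" using rr(2) by force
      have "(u, r') \<in> rect U V" using u u' unfolding rect_def by auto
      thus ?thesis using u RG fn by blast
    qed
    have "finite (snd ` rect U V)"
    proof (cases "snd ` rect U V = {}")
      case False
      then obtain r where "r \<in> snd ` rect U V" by blast
      hence "snd ` rect U V = {r}" using ss by blast
      thus ?thesis by simp
    qed simp
    thus ?thesis unfolding U_def V_def .
  qed
  hence "finite (\<Union>p\<in>F. snd ` rect (fst p) (snd p))" using F(1) by blast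
  thus ?thesis using sub finite_subset by blast
qed


lemma dblz_image: "dblz A = (\<lambda>x. (fst x @ fst x, snd x)) ` A"
proof
  show "dblz A \<subseteq> (\<lambda>x. (fst x @ fst x, snd x)) ` A"
  proof
    fix w assume "w \<in> dblz A"
    hence "\<exists>zs rs. w = (zs @ zs, rs) \<and> (zs, rs) \<in> A" unfolding dblz_def by blast
    then obtain zs rs where "(zs, rs) \<in> A" "w = (zs @ zs, rs)" by blast
    thus "w \<in> (\<lambda>x. (fst x @ fst x, snd x)) ` A" by (intro image_eqI[of _ _ "(zs, rs)"]) auto
  qed
  show "(\<lambda>x. (fst x @ fst x, snd x)) ` A \<subseteq> dblz A"
  proof
    fix w assume "w \<in> (\<lambda>x. (fst x @ fst x, snd x)) ` A"
    then obtain zs rs where "(zs, rs) \<in> A" "w = (zs @ zs, rs)" by auto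
    thus "w \<in> dblz A" unfolding dblz_def by auto
  qed
qed

lemma prd_right: "prd A {y} = (\<lambda>x. (fst x @ fst y, snd x @ snd y)) ` A"
proof
  show "prd A {y} \<subseteq> (\<lambda>x. (fst x @ fst y, snd x @ snd y)) ` A"
  proof
    fix w assume "w \<in> prd A {y}"
    then obtain zs rs where "(zs, rs) \<in> A" "w = (zs @ fst y, rs @ snd y)" unfolding prd_def by auto
    thus "w \<in> (\<lambda>x. (fst x @ fst y, snd x @ snd y)) ` A" by (intro image_eqI[of _ _ "(zs, rs)"]) auto
  qed
  show "(\<lambda>x. (fst x @ fst y, snd x @ snd y)) ` A \<subseteq> prd A {y}"
  proof
    fix w assume "w \<in> (\<lambda>x. (fst x @ fst y, snd x @ snd y)) ` A"
    then obtain x where x: "x \<in> A" "w = (fst x @ fst y, snd x @ snd y)" by blast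
    show "w \<in> prd A {y}" unfolding prd_def using x
      by (intro CollectI exI[of _ "fst x"] exI[of _ "snd x"] exI[of _ "fst y"] exI[of _ "snd y"]) auto
  qed
qed

lemma Xr: assumes "A \<subseteq> sp Z R a b"
  shows "A \<inter> prd (sp Z R a 0) {([], r)} = {x\<in>A. snd x = r}"
proof -
  have "prd (sp Z R a 0) {([], r)} = (\<lambda>x. (fst x, snd x @ r)) ` sp Z R a 0"
    unfolding prd_right by simp
  moreover have "x \<in> (\<lambda>x. (fst x, snd x @ r)) ` sp Z R a 0" if "x \<in> A" "snd x = r" for x
  proof -
    obtain zs rs where x: "x = (zs, rs)" by (cases x)
    have "(fst x, []) \<in> sp Z R a 0" using that assms unfolding sp_def x by auto
    thus ?thesis using that by (intro image_eqI[of _ _ "(fst x, [])"]) auto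
  qed
  moreover have "snd y = []" if "y \<in> sp Z R a 0" for y using that unfolding sp_def by auto
  ultimately show ?thesis by auto
qed

lemma graph_on_image: "graph_on X f = (\<lambda>x. (fst x @ fst (f x), snd x @ snd (f x))) ` X"
  unfolding graph_on_def by blast

theorem proposition2p3:
  fixes Z :: "'z set" and R :: "'r set"
    and D :: "nat \<Rightarrow> nat \<Rightarrow> ('z list \<times> 'r list) set set"
    and m n :: nat and X :: "('z list \<times> 'r list) set"
  assumes "two_sorted_structure Z R D"
    and "fully_orthogonal Z R D"
    and "infinite Z"
    and "X \<in> D m n"
    and "X \<noteq> {}"
  shows "(Z_internal Z R D m n X \<longleftrightarrow> finite (snd ` X)) \<and>
         (finite (snd ` X) \<longleftrightarrow>
            (\<exists>f Y. Y \<in> D (m + 1) 0 \<and> definable_map Z R D m n (m + 1) 0 X f \<and> bij_betw f X Y))"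
proof -
  note TS = assms(1) and FO = assms(2)
  have Xsp: "X \<subseteq> sp Z R m n" using Dsub[OF TS assms(4)] .
  have A: "finite (snd ` X)" if ZI: "Z_internal Z R D m n X"
  proof -
    obtain k g where g: "definable_map Z R D k 0 m n (sp Z R k 0) g" "g ` sp Z R k 0 = X"
      using ZI unfolding Z_internal_def by blast
    let ?G = "graph_on (sp Z R k 0) g"
    have GD: "?G \<in> D (k + m) (0 + n)" using g(1) unfolding definable_map_def by blast
    have sndG: "snd ` ?G = snd ` X"
    proof -
      have "snd ` ?G = (\<lambda>x. snd x @ snd (g x)) ` sp Z R k 0"
        unfolding graph_on_image image_image by simp
      also have "\<dots> = (\<lambda>x. snd (g x)) ` sp Z R k 0"
        by (rule image_cong[OF refl]) (auto simp: sp_def)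
      also have "\<dots> = snd ` X" using g(2) by (auto simp: image_image[symmetric])
      finally show ?thesis .
    qed
    have "finite (snd ` ?G)"
    proof (rule fin_func[OF FO GD])
      fix u r r' assume "(u, r) \<in> ?G" "(u, r') \<in> ?G"
      then obtain x x' where x: "x \<in> sp Z R k 0" "u = fst x @ fst (g x)" "r = snd x @ snd (g x)"
        and x': "x' \<in> sp Z R k 0" "u = fst x' @ fst (g x')" "r' = snd x' @ snd (g x')"
        unfolding graph_on_def by auto
      have "length (fst x) = k" "length (fst x') = k" "snd x = []" "snd x' = []"
        using x(1) x'(1) by (auto simp: sp_def)
      hence "fst x = fst x'" using x(2) x'(2) by (metis append_eq_append_conv)
      hence "x = x'" using \<open>snd x = []\<close> \<open>snd x' = []\<close> by (simp add: prod_eq_iff)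
      thus "r = r'" using x x' by simp
    qed
    thus ?thesis using sndG by simp
  qed
  have B: "finite (snd ` X)" if EX: "\<exists>f Y. Y \<in> D (m + 1) 0 \<and> definable_map Z R D m n (m + 1) 0 X f \<and> bij_betw f X Y"
  proof -
    obtain g Y where g: "definable_map Z R D m n (m + 1) 0 X g" "bij_betw g X Y"
      using EX by blast
    let ?G = "graph_on X g"
    have GD: "?G \<in> D (m + (m + 1)) (n + 0)" using g(1) unfolding definable_map_def by blast
    have gsp: "\<And>x. x \<in> X \<Longrightarrow> snd (g x) = []" using g(1) unfolding definable_map_def sp_def by auto
    have sndG: "snd ` ?G = snd ` X"
    proof -
      have "snd ` ?G = (\<lambda>x. snd x @ snd (g x)) ` X"
        unfolding graph_on_image image_image by simp
      also have "\<dots> = snd ` X"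
        by (rule image_cong[OF refl]) (auto simp: gsp)
      finally show ?thesis .
    qed
    have "finite (snd ` ?G)"
    proof (rule fin_func[OF FO GD])
      fix u r r' assume "(u, r) \<in> ?G" "(u, r') \<in> ?G"
      then obtain x x' where x: "x \<in> X" "u = fst x @ fst (g x)" "r = snd x @ snd (g x)"
        and x': "x' \<in> X" "u = fst x' @ fst (g x')" "r' = snd x' @ snd (g x')"
        unfolding graph_on_def by auto
      have "length (fst x) = m" "length (fst x') = m"
        using x(1) x'(1) Xsp by (auto simp: sp_def)
      hence "fst x = fst x'" "fst (g x) = fst (g x')" using x(2) x'(2) by (metis append_eq_append_conv)+
      hence "g x = g x'" using gsp[OF x(1)] gsp[OF x'(1)] by (simp add: prod_eq_iff)
      hence "x = x'" using g(2) x(1) x'(1) unfolding bij_betw_def inj_on_def by blast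
      thus "r = r'" using x x' by simp
    qed
    thus ?thesis using sndG by simp
  qed
  define S where "S = snd ` X"
  have C: "Z_internal Z R D m n X \<and> (\<exists>f Y. Y \<in> D (m + 1) 0 \<and> definable_map Z R D m n (m + 1) 0 X f \<and> bij_betw f X Y)"
    if finS: "finite S"
  proof -
    obtain Bs where Bs: "Bs \<subseteq> Z" "finite Bs" "card Bs = card S"
      using infinite_arbitrarily_large[OF assms(3)] by blast
    obtain c where c: "bij_betw c S Bs" using finite_same_card_bij[OF finS Bs(2) Bs(3)[symmetric]] by blast
    have cinj: "inj_on c S" and cZ: "\<And>r. r \<in> S \<Longrightarrow> c r \<in> Z"
      using c Bs(1) unfolding bij_betw_def by auto
    define f where "f = (\<lambda>x::'z list \<times> 'r list. (fst x @ [c (snd x)], [] :: 'r list))"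
    define G where "G = (\<lambda>x. (fst x @ fst x @ [c (snd x)], snd x)) ` X"
    have Xlen: "\<And>x. x \<in> X \<Longrightarrow> length (fst x) = m \<and> set (fst x) \<subseteq> Z \<and> length (snd x) = n \<and> set (snd x) \<subseteq> R"
      using Xsp unfolding sp_def by (auto simp: subset_iff)
    have GD: "G \<in> D (m + m + 1) (n + 0)"
    proof -
      define Gp where "Gp r = prd (dblz (X \<inter> prd (sp Z R m 0) {([], r)})) {([c r], [])}" for r
      have "Gp r \<in> D (m + m + 1) (n + 0)" if r: "r \<in> S" for r
      proof -
        have rsp: "([], r) \<in> sp Z R 0 n"
        proof -
          obtain x where "x \<in> X" "r = snd x" using r unfolding S_def by blast
          thus ?thesis using Xlen unfolding sp_def by auto
        qed
        have "prd (sp Z R m 0) {([], r)} \<in> D (m + 0) (0 + n)"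
          by (intro Dprd[OF TS] Dsp[OF TS] Dpt[OF TS rsp])
        hence "X \<inter> prd (sp Z R m 0) {([], r)} \<in> D m n"
          using Dint[OF TS assms(4)] by simp
        hence "dblz (X \<inter> prd (sp Z R m 0) {([], r)}) \<in> D (m + m) n" by (rule Ddblz[OF TS])
        moreover have "{([c r], [])} \<in> D 1 0" using cZ[OF r] by (rule Dptz[OF TS])
        ultimately show ?thesis unfolding Gp_def by (rule Dprd[OF TS])
      qed
      hence "(\<Union>r\<in>S. Gp r) \<in> D (m + m + 1) (n + 0)"
        using finS by (intro DUnion[OF TS])
      moreover have "(\<Union>r\<in>S. Gp r) = G"
      proof -
        have "Gp r = (\<lambda>x. (fst x @ fst x @ [c r], snd x)) ` {x\<in>X. snd x = r}" for r
        proof -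
          have e: "X \<inter> prd (sp Z R m 0) {([], r)} = {x\<in>X. snd x = r}" by (rule Xr[OF Xsp])
          have "Gp r = prd (dblz {x\<in>X. snd x = r}) {([c r], [])}" unfolding Gp_def using e by simp
          thus ?thesis unfolding prd_right dblz_image image_image by simp
        qed
        hence "(\<Union>r\<in>S. Gp r) = (\<Union>r\<in>S. (\<lambda>x. (fst x @ fst x @ [c (snd x)], snd x)) ` {x\<in>X. snd x = r})"
          by (auto simp: image_iff)
        also have "\<dots> = G" unfolding G_def S_def by blast
        finally show ?thesis .
      qed
      ultimately show ?thesis by simp
    qed
    define H1 where "H1 = (\<lambda>x. (fst x @ [c (snd x)] @ fst x, snd x)) ` X"
    have rotG: "(\<lambda>(zs, rs). (rotate m zs, rs)) ` G = H1"
      unfolding G_def H1_def image_image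
    proof (rule image_cong[OF refl])
      fix x assume "x \<in> X"
      hence "length (fst x) = m" using Xlen by blast
      thus "(case (fst x @ fst x @ [c (snd x)], snd x) of (zs, rs) \<Rightarrow> (rotate m zs, rs)) =
            (fst x @ [c (snd x)] @ fst x, snd x)"
        using rotate_append[of "fst x" "fst x @ [c (snd x)]"] by simp
    qed
    have H1D: "H1 \<in> D (m + 1 + m) (0 + n)"
      using Drot[OF TS GD, of m] rotG by (simp add: ac_simps)
    define Y where "Y = f ` X"
    have YD: "Y \<in> D (m + 1) 0"
    proof -
      have "(\<lambda>(zs, rs). (take (m + 1) zs, take 0 rs)) ` H1 = Y"
        unfolding H1_def Y_def f_def image_image
      proof (rule image_cong[OF refl])
        fix x assume "x \<in> X"
        hence "length (fst x) = m" using Xlen by blast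
        thus "(case (fst x @ [c (snd x)] @ fst x, snd x) of (zs, rs) \<Rightarrow> (take (m + 1) zs, take 0 rs)) =
            (fst x @ [c (snd x)], [])" by simp
      qed
      thus ?thesis using Dtake[OF TS H1D] by simp
    qed
    have finj: "inj_on f X"
    proof
      fix x y assume "x \<in> X" "y \<in> X" "f x = f y"
      hence "fst x = fst y" "c (snd x) = c (snd y)" "snd x \<in> S" "snd y \<in> S"
        using Xlen unfolding f_def S_def by auto
      thus "x = y" using cinj by (simp add: inj_on_def prod_eq_iff)
    qed
    have fsp: "\<And>x. x \<in> X \<Longrightarrow> f x \<in> sp Z R (m + 1) 0"
      using Xlen cZ unfolding f_def sp_def S_def by auto
    have graphf: "graph_on X f = G"
      unfolding graph_on_image G_def f_def by simp
    have dmf: "definable_map Z R D m n (m + 1) 0 X f"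
      unfolding definable_map_def using Xsp fsp graphf GD by (simp add: ac_simps)
    have bf: "bij_betw f X Y" using finj unfolding Y_def bij_betw_def by simp
    obtain x0 where x0: "x0 \<in> X" using assms(5) by blast
    define h where "h y = (if y \<in> Y then inv_into X f y else x0)" for y
    have hX: "\<And>y. h y \<in> X" unfolding h_def Y_def using x0 by (auto intro: inv_into_into)
    have Ysp: "Y \<subseteq> sp Z R (m + 1) 0" using fsp unfolding Y_def by auto
    define H2 where "H2 = prd (sp Z R (m + 1) 0 - Y) {x0}"
    have H2D: "H2 \<in> D (m + 1 + m) (0 + n)"
      unfolding H2_def using Xsp x0 by (intro Dprd[OF TS] Dcompl[OF TS YD] Dpt[OF TS]) auto
    have graphh: "graph_on (sp Z R (m + 1) 0) h = H1 \<union> H2"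
    proof
      show "graph_on (sp Z R (m + 1) 0) h \<subseteq> H1 \<union> H2"
      proof
        fix w assume "w \<in> graph_on (sp Z R (m + 1) 0) h"
        then obtain y where y: "y \<in> sp Z R (m + 1) 0" "w = (fst y @ fst (h y), snd y @ snd (h y))"
          unfolding graph_on_def by auto
        have sy: "snd y = []" using y(1) unfolding sp_def by auto
        show "w \<in> H1 \<union> H2"
        proof (cases "y \<in> Y")
          case True
          then obtain x where x: "x \<in> X" "y = f x" unfolding Y_def by auto
          have "h y = x" unfolding h_def using True x finj by (simp add: inv_into_f_f)
          hence "w = (fst x @ [c (snd x)] @ fst x, snd x)" using y x sy unfolding f_def by simp
          thus ?thesis unfolding H1_def using x by auto
        next
          case False
          hence "h y = x0" unfolding h_def by simp
          hence "w = (fst y @ fst x0, snd y @ snd x0)" using y by simp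
          moreover have "y \<in> sp Z R (m + 1) 0 - Y" using y False by simp
          ultimately have "w \<in> prd (sp Z R (m + 1) 0 - Y) {x0}" unfolding prd_right by blast
          thus ?thesis unfolding H2_def by blast
        qed
      qed
    next
      show "H1 \<union> H2 \<subseteq> graph_on (sp Z R (m + 1) 0) h"
      proof
        fix w assume "w \<in> H1 \<union> H2"
        then show "w \<in> graph_on (sp Z R (m + 1) 0) h"
        proof
          assume "w \<in> H1"
          then obtain x where x: "x \<in> X" "w = (fst x @ [c (snd x)] @ fst x, snd x)"
            unfolding H1_def by auto
          have fY: "f x \<in> Y" using x unfolding Y_def by auto
          have "h (f x) = x" unfolding h_def using fY x finj by (simp add: inv_into_f_f)
          hence "w = (fst (f x) @ fst (h (f x)), snd (f x) @ snd (h (f x)))"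
            using x unfolding f_def by simp
          thus ?thesis unfolding graph_on_def using fsp[OF x(1)] by blast
        next
          assume "w \<in> H2"
          then obtain y where y: "y \<in> sp Z R (m + 1) 0" "y \<notin> Y" "w = (fst y @ fst x0, snd y @ snd x0)"
            unfolding H2_def prd_def by auto
          have "h y = x0" using y(2) unfolding h_def by simp
          thus ?thesis unfolding graph_on_image using y by (intro image_eqI[of _ _ y]) auto
        qed
      qed
    qed
    have hsurj: "h ` sp Z R (m + 1) 0 = X"
    proof
      show "h ` sp Z R (m + 1) 0 \<subseteq> X" using hX by auto
      show "X \<subseteq> h ` sp Z R (m + 1) 0"
      proof
        fix x assume x: "x \<in> X"
        have fY: "f x \<in> Y" using x unfolding Y_def by auto
        have "h (f x) = x" unfolding h_def using fY x finj by (simp add: inv_into_f_f)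
        thus "x \<in> h ` sp Z R (m + 1) 0" using fsp[OF x] by force
      qed
    qed
    have "definable_map Z R D (m + 1) 0 m n (sp Z R (m + 1) 0) h"
      unfolding definable_map_def graphh using hX Xsp Dun[OF TS H1D H2D] by auto
    hence "Z_internal Z R D m n X" unfolding Z_internal_def using hsurj by blast
    thus ?thesis using YD dmf bf by blast
  qed
  show ?thesis using A B C unfolding S_def by blast
qed

end
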